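(* For every $i\in\mathcal U$ and every propositional formula $F$: the sequent $B\to T(i,\neg F.\emptyset,\emptyset.1)$ is provable if and only if $F$ is a tautology ($\models F$).
   Context: The theory $\mathbf B$: first-order theory with binary infix function symbol "$.$", predicates $T(i,a,u)$, $U(x,s,z,q,j,i,u)$, and single axiom $B$, the conjunction of the universal closures of: (1) $T(i,a,u)\supset U(\emptyset,\emptyset,a.\emptyset,1,i,i,u)$; (2) $U(\emptyset,\emptyset,a.\emptyset,1,i,i,u)\supset T(i,a,u)$; (3) $U(x,s,z,0,i,i,x)$; (4) $U(x,v,r.z,p,i,i,u)\supset U(x.v,s,z,q,\,q.s.p.r.0.j,\,i,u)$; (5) $U(x.r,v,z,p,i,i,u)\supset U(x,s,v.z,q,\,q.s.p.r.1.j,\,i,u)$; (6) $U(x,s,z,q,j,i,u)\supset U(x,s,z,q,\,q'.s'.p.r.d.j,\,i,u)$. In the intended interpretation $T(i,a,u)$ means the Turing machine with code $i$ (a list of quintuples $q.s.p.r.d$) on input list $a$ halts with output $u$; a propositional formula $F$ is given as input list $F.\emptyset$. $\mathcal U$ is the set of deterministic Turing machine codes (no two quintuples with the same $q.s$ and different $p.r.d$) that on every input $F.\emptyset$, $F$ a propositional formula, halt with output $\emptyset.0$ if $F$ is satisfiable and $\emptyset.1$ if $F$ is unsatisfiable. *)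

theory Defs
  imports Main
begin

datatype form = PVar nat | PBot | PNeg form | PAnd form form | POr form form | PImp form form

fun peval :: "(nat \<Rightarrow> bool) \<Rightarrow> form \<Rightarrow> bool" where
  "peval v (PVar n) = v n"
| "peval v PBot = False"
| "peval v (PNeg f) = (\<not> peval v f)"
| "peval v (PAnd f g) = (peval v f \<and> peval v g)"
| "peval v (POr f g) = (peval v f \<or> peval v g)"
| "peval v (PImp f g) = (peval v f \<longrightarrow> peval v g)"

definition satisfiable :: "form \<Rightarrow> bool" where
  "satisfiable f \<longleftrightarrow> (\<exists>v. peval v f)"

definition tautology :: "form \<Rightarrow> bool" where
  "tautology f \<longleftrightarrow> (\<forall>v. peval v f)"

datatype gterm = GEmp | GZero | GOne | GDot gterm gterm (infixr "\<cdot>" 70)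

section \<open>Intended interpretation of U and T (least relation closed under axioms (3)-(6))\<close>

text \<open>The dot is read right-associatively: q.s.p.r.d.j = q.(s.(p.(r.(d.j)))).\<close>

inductive Ured :: "gterm \<Rightarrow> gterm \<Rightarrow> gterm \<Rightarrow> gterm \<Rightarrow> gterm \<Rightarrow> gterm \<Rightarrow> gterm \<Rightarrow> bool" where
  halt: "Ured x s z GZero i i x"
| left: "Ured x v (r \<cdot> z) p i i u \<Longrightarrow> Ured (x \<cdot> v) s z q (q \<cdot> s \<cdot> p \<cdot> r \<cdot> GZero \<cdot> j) i u"
| right: "Ured (x \<cdot> r) v z p i i u \<Longrightarrow> Ured x s (v \<cdot> z) q (q \<cdot> s \<cdot> p \<cdot> r \<cdot> GOne \<cdot> j) i u"
| skip: "Ured x s z q j i u \<Longrightarrow> Ured x s z q (q' \<cdot> s' \<cdot> p \<cdot> r \<cdot> d \<cdot> j) i u"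

definition Tsem :: "gterm \<Rightarrow> gterm \<Rightarrow> gterm \<Rightarrow> bool" where
  "Tsem i a u \<longleftrightarrow> Ured GEmp GEmp (a \<cdot> GEmp) GOne i i u"

section \<open>Turing machine codes\<close>

inductive is_code :: "gterm \<Rightarrow> bool" where
  "is_code GEmp"
| "is_code j \<Longrightarrow> d \<in> {GZero, GOne} \<Longrightarrow> is_code (q \<cdot> s \<cdot> p \<cdot> r \<cdot> d \<cdot> j)"

fun quints :: "gterm \<Rightarrow> (gterm \<times> gterm \<times> gterm \<times> gterm \<times> gterm) set" where
  "quints (q \<cdot> s \<cdot> p \<cdot> r \<cdot> d \<cdot> j) = insert (q, s, p, r, d) (quints j)"
| "quints _ = {}"

definition deterministic :: "gterm \<Rightarrow> bool" where
  "deterministic i \<longleftrightarrow>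
     (\<forall>q s p r d p' r' d'. (q, s, p, r, d) \<in> quints i \<and> (q, s, p', r', d') \<in> quints i
        \<longrightarrow> (p, r, d) = (p', r', d'))"

definition halts_with :: "gterm \<Rightarrow> gterm \<Rightarrow> gterm \<Rightarrow> bool" where
  "halts_with i a u \<longleftrightarrow> {w. Tsem i a w} = {u}"

text \<open>The set U of deciders for propositional satisfiability, relative to the encoding
  enc of propositional formulas as ground terms.\<close>
definition Udec :: "(form \<Rightarrow> gterm) \<Rightarrow> gterm set" where
  "Udec enc = {i. is_code i \<and> deterministic i \<and>
     (\<forall>F. (satisfiable F \<longrightarrow> halts_with i (enc F \<cdot> GEmp) (GEmp \<cdot> GZero)) \<and>
          (\<not> satisfiable F \<longrightarrow> halts_with i (enc F \<cdot> GEmp) (GEmp \<cdot> GOne)))}"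

section \<open>First-order syntax (locally nameless: free variables Fv, de Bruijn bound variables Bv)\<close>

datatype tm = Fv nat | Bv nat | CEmp | CZero | COne | CDot tm tm

datatype pred = PT | PU

datatype fm = Bot | Atom pred "tm list" | Imp fm fm | Conj fm fm | Disj fm fm | All fm | Ex fm

fun emb :: "gterm \<Rightarrow> tm" where
  "emb GEmp = CEmp" | "emb GZero = CZero" | "emb GOne = COne"
| "emb (GDot a b) = CDot (emb a) (emb b)"

fun closed_tm :: "tm \<Rightarrow> bool" where
  "closed_tm (Bv n) = False"
| "closed_tm (CDot a b) = (closed_tm a \<and> closed_tm b)"
| "closed_tm _ = True"

fun fv_tm :: "tm \<Rightarrow> nat set" where
  "fv_tm (Fv x) = {x}"
| "fv_tm (CDot a b) = fv_tm a \<union> fv_tm b"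
| "fv_tm _ = {}"

fun fv_fm :: "fm \<Rightarrow> nat set" where
  "fv_fm Bot = {}"
| "fv_fm (Atom P ts) = (\<Union>t\<in>set ts. fv_tm t)"
| "fv_fm (Imp A B) = fv_fm A \<union> fv_fm B"
| "fv_fm (Conj A B) = fv_fm A \<union> fv_fm B"
| "fv_fm (Disj A B) = fv_fm A \<union> fv_fm B"
| "fv_fm (All A) = fv_fm A"
| "fv_fm (Ex A) = fv_fm A"

fun inst_tm :: "nat \<Rightarrow> tm \<Rightarrow> tm \<Rightarrow> tm" where
  "inst_tm k t (Bv n) = (if n < k then Bv n else if n = k then t else Bv (n - 1))"
| "inst_tm k t (CDot a b) = CDot (inst_tm k t a) (inst_tm k t b)"
| "inst_tm k t u = u"

fun inst_fm :: "nat \<Rightarrow> tm \<Rightarrow> fm \<Rightarrow> fm" where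
  "inst_fm k t Bot = Bot"
| "inst_fm k t (Atom P ts) = Atom P (map (inst_tm k t) ts)"
| "inst_fm k t (Imp A B) = Imp (inst_fm k t A) (inst_fm k t B)"
| "inst_fm k t (Conj A B) = Conj (inst_fm k t A) (inst_fm k t B)"
| "inst_fm k t (Disj A B) = Disj (inst_fm k t A) (inst_fm k t B)"
| "inst_fm k t (All A) = All (inst_fm (Suc k) t A)"
| "inst_fm k t (Ex A) = Ex (inst_fm (Suc k) t A)"

fun abst_tm :: "nat \<Rightarrow> nat \<Rightarrow> tm \<Rightarrow> tm" where
  "abst_tm k x (Fv y) = (if y = x then Bv k else Fv y)"
| "abst_tm k x (Bv n) = (if n < k then Bv n else Bv (Suc n))"
| "abst_tm k x (CDot a b) = CDot (abst_tm k x a) (abst_tm k x b)"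
| "abst_tm k x u = u"

fun abst_fm :: "nat \<Rightarrow> nat \<Rightarrow> fm \<Rightarrow> fm" where
  "abst_fm k x Bot = Bot"
| "abst_fm k x (Atom P ts) = Atom P (map (abst_tm k x) ts)"
| "abst_fm k x (Imp A B) = Imp (abst_fm k x A) (abst_fm k x B)"
| "abst_fm k x (Conj A B) = Conj (abst_fm k x A) (abst_fm k x B)"
| "abst_fm k x (Disj A B) = Disj (abst_fm k x A) (abst_fm k x B)"
| "abst_fm k x (All A) = All (abst_fm (Suc k) x A)"
| "abst_fm k x (Ex A) = Ex (abst_fm (Suc k) x A)"

definition univ_closure :: "fm \<Rightarrow> fm" where
  "univ_closure A = foldr (\<lambda>x B. All (abst_fm 0 x B)) (sorted_list_of_set (fv_fm A)) A"

section \<open>Classical first-order natural deduction (without equality)\<close>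

inductive nd :: "fm list \<Rightarrow> fm \<Rightarrow> bool" where
  Assum: "A \<in> set G \<Longrightarrow> nd G A"
| ImpI: "nd (A # G) B \<Longrightarrow> nd G (Imp A B)"
| ImpE: "nd G (Imp A B) \<Longrightarrow> nd G A \<Longrightarrow> nd G B"
| ConjI: "nd G A \<Longrightarrow> nd G B \<Longrightarrow> nd G (Conj A B)"
| ConjE1: "nd G (Conj A B) \<Longrightarrow> nd G A"
| ConjE2: "nd G (Conj A B) \<Longrightarrow> nd G B"
| DisjI1: "nd G A \<Longrightarrow> nd G (Disj A B)"
| DisjI2: "nd G B \<Longrightarrow> nd G (Disj A B)"
| DisjE: "nd G (Disj A B) \<Longrightarrow> nd (A # G) C \<Longrightarrow> nd (B # G) C \<Longrightarrow> nd G C"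
| Class: "nd (Imp A Bot # G) Bot \<Longrightarrow> nd G A"
| AllI: "nd G (inst_fm 0 (Fv x) A) \<Longrightarrow> x \<notin> fv_fm A \<Longrightarrow> x \<notin> (\<Union>B\<in>set G. fv_fm B)
          \<Longrightarrow> nd G (All A)"
| AllE: "nd G (All A) \<Longrightarrow> closed_tm t \<Longrightarrow> nd G (inst_fm 0 t A)"
| ExI: "nd G (inst_fm 0 t A) \<Longrightarrow> closed_tm t \<Longrightarrow> nd G (Ex A)"
| ExE: "nd G (Ex A) \<Longrightarrow> nd (inst_fm 0 (Fv x) A # G) B \<Longrightarrow> x \<notin> fv_fm A \<Longrightarrow> x \<notin> fv_fm B
          \<Longrightarrow> x \<notin> (\<Union>C\<in>set G. fv_fm C) \<Longrightarrow> nd G B"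

definition TT :: "tm \<Rightarrow> tm \<Rightarrow> tm \<Rightarrow> fm" where
  "TT i a u = Atom PT [i, a, u]"

definition UU :: "tm \<Rightarrow> tm \<Rightarrow> tm \<Rightarrow> tm \<Rightarrow> tm \<Rightarrow> tm \<Rightarrow> tm \<Rightarrow> fm" where
  "UU x s z q j i u = Atom PU [x, s, z, q, j, i, u]"

definition axB :: fm where
  "axB = (let x = Fv 0; s = Fv 1; z = Fv 2; q = Fv 3; j = Fv 4; i = Fv 5; u = Fv 6; a = Fv 7;
              v = Fv 8; r = Fv 9; p = Fv 10; d = Fv 11; q' = Fv 12; s' = Fv 13;
              quint = (\<lambda>q s p r d j. CDot q (CDot s (CDot p (CDot r (CDot d j)))));
              B1 = Imp (TT i a u) (UU CEmp CEmp (CDot a CEmp) COne i i u);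
              B2 = Imp (UU CEmp CEmp (CDot a CEmp) COne i i u) (TT i a u);
              B3 = UU x s z CZero i i x;
              B4 = Imp (UU x v (CDot r z) p i i u) (UU (CDot x v) s z q (quint q s p r CZero j) i u);
              B5 = Imp (UU (CDot x r) v z p i i u) (UU x s (CDot v z) q (quint q s p r COne j) i u);
              B6 = Imp (UU x s z q j i u) (UU x s z q (quint q' s' p r d j) i u)
          in Conj (univ_closure B1) (Conj (univ_closure B2) (Conj (univ_closure B3)
               (Conj (univ_closure B4) (Conj (univ_closure B5) (univ_closure B6))))))"

end

theory Submission
  imports Defs
begin

fun evt :: "(nat \<Rightarrow> gterm) \<Rightarrow> (nat \<Rightarrow> gterm) \<Rightarrow> tm \<Rightarrow> gterm" where
  "evt \<sigma> e (Fv x) = \<sigma> x"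
| "evt \<sigma> e (Bv n) = e n"
| "evt \<sigma> e CEmp = GEmp"
| "evt \<sigma> e CZero = GZero"
| "evt \<sigma> e COne = GOne"
| "evt \<sigma> e (CDot a b) = GDot (evt \<sigma> e a) (evt \<sigma> e b)"

fun semp :: "pred \<Rightarrow> gterm list \<Rightarrow> bool" where
  "semp PT [i, a, u] = Tsem i a u"
| "semp PU [x, s, z, q, j, i, u] = Ured x s z q j i u"
| "semp _ _ = False"

fun sem :: "(nat \<Rightarrow> gterm) \<Rightarrow> (nat \<Rightarrow> gterm) \<Rightarrow> fm \<Rightarrow> bool" where
  "sem \<sigma> e Bot = False"
| "sem \<sigma> e (Atom P ts) = semp P (map (evt \<sigma> e) ts)"
| "sem \<sigma> e (Imp A B) = (sem \<sigma> e A \<longrightarrow> sem \<sigma> e B)"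
| "sem \<sigma> e (Conj A B) = (sem \<sigma> e A \<and> sem \<sigma> e B)"
| "sem \<sigma> e (Disj A B) = (sem \<sigma> e A \<or> sem \<sigma> e B)"
| "sem \<sigma> e (All A) = (\<forall>d. sem \<sigma> (case_nat d e) A)"
| "sem \<sigma> e (Ex A) = (\<exists>d. sem \<sigma> (case_nat d e) A)"

definition ins :: "nat \<Rightarrow> gterm \<Rightarrow> (nat \<Rightarrow> gterm) \<Rightarrow> nat \<Rightarrow> gterm" where
  "ins k d e = (\<lambda>n. if n < k then e n else if n = k then d else e (n - 1))"

lemma ins_Suc: "ins (Suc k) v (case_nat d e) = case_nat d (ins k v e)"
  by (rule ext) (auto simp: ins_def split: nat.splits)

lemma ins_0: "ins 0 d e = case_nat d e"
  by (rule ext) (auto simp: ins_def split: nat.splits)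

lemma evt_closed: "closed_tm t \<Longrightarrow> evt \<sigma> e t = evt \<sigma> e' t"
  by (induction t) auto

lemma evt_inst: "closed_tm t \<Longrightarrow> evt \<sigma> e (inst_tm k t u) = evt \<sigma> (ins k (evt \<sigma> e t) e) u"
  by (induction u) (auto simp: ins_def)

lemma sem_inst: "closed_tm t \<Longrightarrow> sem \<sigma> e (inst_fm k t A) = sem \<sigma> (ins k (evt \<sigma> e t) e) A"
proof (induction A arbitrary: k e)
  case (Atom P ts)
  then show ?case by (simp add: evt_inst comp_def)
next
  case (All A)
  have "\<And>d. evt \<sigma> (case_nat d e) t = evt \<sigma> e t" by (rule evt_closed[OF All.prems])
  then show ?case using All by (simp add: ins_Suc)
next
  case (Ex A)
  have "\<And>d. evt \<sigma> (case_nat d e) t = evt \<sigma> e t" by (rule evt_closed[OF Ex.prems])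
  then show ?case using Ex by (simp add: ins_Suc)
qed auto

lemma evt_abst: "evt \<sigma> (ins k d e) (abst_tm k x u) = evt (\<sigma>(x:=d)) e u"
  by (induction u) (auto simp: ins_def)

lemma sem_abst: "sem \<sigma> (ins k d e) (abst_fm k x A) = sem (\<sigma>(x:=d)) e A"
proof (induction A arbitrary: k e)
  case (Atom P ts)
  have "map (evt \<sigma> (ins k d e)) (map (abst_tm k x) ts) = map (evt (\<sigma>(x:=d)) e) ts"
    by (simp add: evt_abst)
  then show ?case unfolding abst_fm.simps sem.simps by (rule arg_cong)
next
  case (All A)
  then show ?case by (simp add: ins_Suc[symmetric])
next
  case (Ex A)
  then show ?case by (simp add: ins_Suc[symmetric])
qed auto

lemma evt_fv: "(\<forall>x\<in>fv_tm u. \<sigma> x = \<sigma>' x) \<Longrightarrow> evt \<sigma> e u = evt \<sigma>' e u"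
  by (induction u) auto

lemma sem_fv: "(\<forall>x\<in>fv_fm A. \<sigma> x = \<sigma>' x) \<Longrightarrow> sem \<sigma> e A = sem \<sigma>' e A"
proof (induction A arbitrary: e)
  case (Atom P ts)
  have "map (evt \<sigma> e) ts = map (evt \<sigma>' e) ts"
    unfolding map_eq_conv using Atom.prems by (auto intro!: evt_fv)
  then show ?case unfolding sem.simps by (rule arg_cong)
qed auto

lemma sound: "nd G A \<Longrightarrow> (\<forall>B\<in>set G. sem \<sigma> e B) \<Longrightarrow> sem \<sigma> e A"
proof (induction arbitrary: \<sigma> e rule: nd.induct)
  case (Class A G)
  then show ?case by auto
next
  case (DisjE G A B C)
  from DisjE.IH(1)[OF DisjE.prems] have "sem \<sigma> e A \<or> sem \<sigma> e B" by simp
  then show ?case using DisjE.IH(2,3)[of \<sigma> e] DisjE.prems by auto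
next
  case (AllI G x A)
  show ?case
  proof (simp, intro allI)
    fix d
    have "\<forall>B\<in>set G. sem (\<sigma>(x:=d)) e B"
      using AllI.prems \<open>x \<notin> (\<Union>B\<in>set G. fv_fm B)\<close> sem_fv[of _ "\<sigma>(x:=d)" \<sigma>] by auto
    then have "sem (\<sigma>(x:=d)) e (inst_fm 0 (Fv x) A)" using AllI.IH by blast
    then have "sem (\<sigma>(x:=d)) (case_nat d e) A" by (simp add: sem_inst ins_0)
    then show "sem \<sigma> (case_nat d e) A" using \<open>x \<notin> fv_fm A\<close> sem_fv[of A "\<sigma>(x:=d)" \<sigma>] by auto
  qed
next
  case (AllE G A t)
  then show ?case by (simp add: sem_inst ins_0)
next
  case (ExI G t A)
  then show ?case by (auto simp: sem_inst ins_0)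
next
  case (ExE G A x B)
  from ExE.IH(1)[OF ExE.prems] obtain d where d: "sem \<sigma> (case_nat d e) A" by auto
  have "\<forall>C\<in>set G. sem (\<sigma>(x:=d)) e C"
    using ExE.prems ExE.hyps(5) sem_fv[of _ "\<sigma>(x:=d)" \<sigma>] by auto
  moreover have "sem (\<sigma>(x:=d)) e (inst_fm 0 (Fv x) A)"
    using d ExE.hyps(3) sem_fv[of A "\<sigma>(x:=d)" \<sigma>] by (simp add: sem_inst ins_0)
  ultimately have "sem (\<sigma>(x:=d)) e B" using ExE.IH(2) by auto
  then show ?case using ExE.hyps(4) sem_fv[of B "\<sigma>(x:=d)" \<sigma>] by auto
qed auto

lemma sem_foldr: "(\<forall>\<sigma> e. sem \<sigma> e B) \<Longrightarrow> sem \<sigma> e (foldr (\<lambda>x B. All (abst_fm 0 x B)) xs B)"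
proof (induction xs arbitrary: \<sigma> e)
  case (Cons x xs)
  show ?case using Cons sem_abst[of \<sigma> 0 _ e x, unfolded ins_0] by simp
qed simp

lemma sem_closure: "(\<forall>\<sigma> e. sem \<sigma> e B) \<Longrightarrow> sem \<sigma> e (univ_closure B)"
  unfolding univ_closure_def by (rule sem_foldr)

abbreviation quint where "quint q s p r d j \<equiv> CDot q (CDot s (CDot p (CDot r (CDot d j))))"

definition "B1f = Imp (TT (Fv 5) (Fv 7) (Fv 6)) (UU CEmp CEmp (CDot (Fv 7) CEmp) COne (Fv 5) (Fv 5) (Fv 6))"
definition "B2f = Imp (UU CEmp CEmp (CDot (Fv 7) CEmp) COne (Fv 5) (Fv 5) (Fv 6)) (TT (Fv 5) (Fv 7) (Fv 6))"
definition "B3f = UU (Fv 0) (Fv 1) (Fv 2) CZero (Fv 5) (Fv 5) (Fv 0)"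
definition "B4f = Imp (UU (Fv 0) (Fv 8) (CDot (Fv 9) (Fv 2)) (Fv 10) (Fv 5) (Fv 5) (Fv 6))
   (UU (CDot (Fv 0) (Fv 8)) (Fv 1) (Fv 2) (Fv 3) (quint (Fv 3) (Fv 1) (Fv 10) (Fv 9) CZero (Fv 4)) (Fv 5) (Fv 6))"
definition "B5f = Imp (UU (CDot (Fv 0) (Fv 9)) (Fv 8) (Fv 2) (Fv 10) (Fv 5) (Fv 5) (Fv 6))
   (UU (Fv 0) (Fv 1) (CDot (Fv 8) (Fv 2)) (Fv 3) (quint (Fv 3) (Fv 1) (Fv 10) (Fv 9) COne (Fv 4)) (Fv 5) (Fv 6))"
definition "B6f = Imp (UU (Fv 0) (Fv 1) (Fv 2) (Fv 3) (Fv 4) (Fv 5) (Fv 6))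
   (UU (Fv 0) (Fv 1) (Fv 2) (Fv 3) (quint (Fv 12) (Fv 13) (Fv 10) (Fv 9) (Fv 11) (Fv 4)) (Fv 5) (Fv 6))"

lemma axB_eq: "axB = Conj (univ_closure B1f) (Conj (univ_closure B2f) (Conj (univ_closure B3f)
               (Conj (univ_closure B4f) (Conj (univ_closure B5f) (univ_closure B6f)))))"
  unfolding axB_def Let_def B1f_def B2f_def B3f_def B4f_def B5f_def B6f_def ..

lemma axB_valid: "sem \<sigma> e axB"
  unfolding axB_eq
  by (intro sem.simps(4)[THEN iffD2] conjI sem_closure allI)
     (auto simp: B1f_def B2f_def B3f_def B4f_def B5f_def B6f_def TT_def UU_def Tsem_def
           intro: Ured.intros)

lemma evt_emb: "evt \<sigma> e (emb g) = g"
  by (induction g) auto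

lemma soundTT: "nd [axB] (TT (emb i) (emb a) (emb u)) \<Longrightarrow> Tsem i a u"
proof -
  assume "nd [axB] (TT (emb i) (emb a) (emb u))"
  then have "sem (\<lambda>_. GEmp) (\<lambda>_. GEmp) (TT (emb i) (emb a) (emb u))"
    using sound axB_valid by auto
  then show ?thesis by (simp add: TT_def evt_emb)
qed

fun subt :: "(nat \<Rightarrow> tm) \<Rightarrow> tm \<Rightarrow> tm" where
  "subt \<sigma> (Fv x) = \<sigma> x"
| "subt \<sigma> (CDot a b) = CDot (subt \<sigma> a) (subt \<sigma> b)"
| "subt \<sigma> u = u"

fun subf :: "(nat \<Rightarrow> tm) \<Rightarrow> fm \<Rightarrow> fm" where
  "subf \<sigma> Bot = Bot"
| "subf \<sigma> (Atom P ts) = Atom P (map (subt \<sigma>) ts)"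
| "subf \<sigma> (Imp A B) = Imp (subf \<sigma> A) (subf \<sigma> B)"
| "subf \<sigma> (Conj A B) = Conj (subf \<sigma> A) (subf \<sigma> B)"
| "subf \<sigma> (Disj A B) = Disj (subf \<sigma> A) (subf \<sigma> B)"
| "subf \<sigma> (All A) = All (subf \<sigma> A)"
| "subf \<sigma> (Ex A) = Ex (subf \<sigma> A)"

lemma inst_abst_tm: "inst_tm k t (abst_tm k x u) = subt (Fv(x:=t)) u"
  by (induction u) auto

lemma inst_abst_fm: "inst_fm k t (abst_fm k x A) = subf (Fv(x:=t)) A"
  by (induction A arbitrary: k) (auto simp: inst_abst_tm)

lemma abst_tm_id: "closed_tm u \<Longrightarrow> y \<notin> fv_tm u \<Longrightarrow> abst_tm k y u = u"
  by (induction u) auto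

lemma subt_abst:
  assumes "\<sigma> y = Fv y" "\<forall>z. z \<noteq> y \<longrightarrow> closed_tm (\<sigma> z) \<and> y \<notin> fv_tm (\<sigma> z)"
  shows "subt \<sigma> (abst_tm k y u) = abst_tm k y (subt \<sigma> u)"
  using assms by (induction u) (auto simp: abst_tm_id)

lemma subf_abst:
  assumes "\<sigma> y = Fv y" "\<forall>z. z \<noteq> y \<longrightarrow> closed_tm (\<sigma> z) \<and> y \<notin> fv_tm (\<sigma> z)"
  shows "subf \<sigma> (abst_fm k y A) = abst_fm k y (subf \<sigma> A)"
  using assms by (induction A arbitrary: k) (auto simp: subt_abst)

abbreviation cl where "cl \<equiv> (\<lambda>x B. All (abst_fm 0 x B))"

lemma subf_foldr:
  assumes "x \<notin> set xs" "closed_tm t" "fv_tm t = {}"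
  shows "subf (Fv(x:=t)) (foldr cl xs C) = foldr cl xs (subf (Fv(x:=t)) C)"
  using assms by (induction xs) (auto simp: subf_abst)

lemma subt_id: "fv_tm u = {} \<Longrightarrow> subt \<sigma> u = u"
  by (induction u) auto

lemma subt_comp: "subt \<sigma>1 (subt \<sigma>2 u) = subt (\<lambda>y. subt \<sigma>1 (\<sigma>2 y)) u"
  by (induction u) auto

lemma subf_comp: "subf \<sigma>1 (subf \<sigma>2 A) = subf (\<lambda>y. subt \<sigma>1 (\<sigma>2 y)) A"
  by (induction A) (auto simp: subt_comp)

lemma nd_foldr:
  "distinct xs \<Longrightarrow> (\<forall>x\<in>set xs. closed_tm (\<rho> x) \<and> fv_tm (\<rho> x) = {}) \<Longrightarrow>
   nd G (foldr cl xs C) \<Longrightarrow> nd G (subf (\<lambda>y. if y \<in> set xs then \<rho> y else Fv y) C)"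
proof (induction xs arbitrary: C)
  case Nil
  have t: "subt Fv u = u" for u by (induction u) auto
  have "subf Fv C = C" for C
    by (induction C) (auto simp: t map_idI)
  then show ?case using Nil by (simp add: eta_contract_eq)
next
  case (Cons x xs)
  have "nd G (inst_fm 0 (\<rho> x) (abst_fm 0 x (foldr cl xs C)))"
    using Cons.prems by (auto intro: nd.AllE)
  then have "nd G (foldr cl xs (subf (Fv(x:=\<rho> x)) C))"
    using Cons.prems by (simp add: inst_abst_fm subf_foldr)
  then have "nd G (subf (\<lambda>y. if y \<in> set xs then \<rho> y else Fv y) (subf (Fv(x:=\<rho> x)) C))"
    using Cons by auto
  moreover have "(\<lambda>y. subt (\<lambda>y. if y \<in> set xs then \<rho> y else Fv y) ((Fv(x:=\<rho> x)) y))
       = (\<lambda>y. if y \<in> set (x#xs) then \<rho> y else Fv y)"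
    using Cons.prems by (auto simp: subt_id)
  ultimately show ?case by (simp add: subf_comp)
qed

lemma subt_fv: "(\<forall>x\<in>fv_tm u. \<sigma> x = \<sigma>' x) \<Longrightarrow> subt \<sigma> u = subt \<sigma>' u"
  by (induction u) auto

lemma subf_fv: "(\<forall>x\<in>fv_fm A. \<sigma> x = \<sigma>' x) \<Longrightarrow> subf \<sigma> A = subf \<sigma>' A"
  by (induction A) (auto intro: subt_fv)

lemma finite_fv_tm: "finite (fv_tm u)" by (induction u) auto
lemma finite_fv_fm: "finite (fv_fm A)" by (induction A) (auto simp: finite_fv_tm)

lemma nd_closure:
  assumes "nd G (univ_closure B)" "\<forall>x. closed_tm (\<rho> x) \<and> fv_tm (\<rho> x) = {}"
  shows "nd G (subf \<rho> B)"
proof -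
  let ?xs = "sorted_list_of_set (fv_fm B)"
  have "nd G (subf (\<lambda>y. if y \<in> set ?xs then \<rho> y else Fv y) B)"
    using nd_foldr[of ?xs \<rho> G B] assms unfolding univ_closure_def by auto
  moreover have "subf (\<lambda>y. if y \<in> set ?xs then \<rho> y else Fv y) B = subf \<rho> B"
    by (rule subf_fv) (simp add: finite_fv_fm)
  ultimately show ?thesis by simp
qed

lemma emb_closed: "closed_tm (emb g)" by (induction g) auto
lemma emb_fv: "fv_tm (emb g) = {}" by (induction g) auto

lemma ground_upd: "\<forall>x. closed_tm (((\<lambda>_. CEmp)(a0 := emb g0, a1 := emb g1, a2 := emb g2, a3 := emb g3,
   a4 := emb g4, a5 := emb g5, a6 := emb g6, a7 := emb g7, a8 := emb g8, a9 := emb g9,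
   a10 := emb g10, a11 := emb g11, a12 := emb g12, a13 := emb g13)) x) \<and>
   fv_tm (((\<lambda>_. CEmp)(a0 := emb g0, a1 := emb g1, a2 := emb g2, a3 := emb g3,
   a4 := emb g4, a5 := emb g5, a6 := emb g6, a7 := emb g7, a8 := emb g8, a9 := emb g9,
   a10 := emb g10, a11 := emb g11, a12 := emb g12, a13 := emb g13)) x) = {}"
  by (auto simp: emb_closed emb_fv)

lemma nd_ax:
  "nd [axB] (univ_closure B1f)" "nd [axB] (univ_closure B2f)" "nd [axB] (univ_closure B3f)"
  "nd [axB] (univ_closure B4f)" "nd [axB] (univ_closure B5f)" "nd [axB] (univ_closure B6f)"
proof -
  have a: "nd [axB] axB" by (rule nd.Assum) simp
  show "nd [axB] (univ_closure B1f)" "nd [axB] (univ_closure B2f)" "nd [axB] (univ_closure B3f)"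
    "nd [axB] (univ_closure B4f)" "nd [axB] (univ_closure B5f)" "nd [axB] (univ_closure B6f)"
    using a unfolding axB_eq by (meson nd.ConjE1 nd.ConjE2)+
qed

lemma inst_ax:
  assumes "nd [axB] (univ_closure B)"
  shows "nd [axB] (subf ((\<lambda>_. CEmp)(0 := emb g0, 1 := emb g1, 2 := emb g2, 3 := emb g3,
   4 := emb g4, 5 := emb g5, 6 := emb g6, 7 := emb g7, 8 := emb g8, 9 := emb g9,
   10 := emb g10, 11 := emb g11, 12 := emb g12, 13 := emb g13)) B)"
  by (rule nd_closure[OF assms ground_upd])

lemma ImpE': "nd G X \<Longrightarrow> X = Imp A B \<Longrightarrow> nd G A \<Longrightarrow> nd G B"
  using nd.ImpE by blast

lemma complete_U: "Ured x s z q j i u \<Longrightarrow>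
   nd [axB] (UU (emb x) (emb s) (emb z) (emb q) (emb j) (emb i) (emb u))"
proof (induction rule: Ured.induct)
  case (halt x s z i)
  show ?case
    using inst_ax[OF nd_ax(3), of x s z GEmp GEmp i GEmp GEmp GEmp GEmp GEmp GEmp GEmp GEmp]
    by (simp add: B3f_def UU_def)
next
  case (left x v r z p i u s q j)
  show ?case
    by (rule ImpE'[OF inst_ax[OF nd_ax(4), of x s z q j i u GEmp v r p GEmp GEmp GEmp] _ left.IH]) (simp add: B4f_def UU_def)
next
  case (right x r v z p i u s q j)
  show ?case
    by (rule ImpE'[OF inst_ax[OF nd_ax(5), of x s z q j i u GEmp v r p GEmp GEmp GEmp] _ right.IH]) (simp add: B5f_def UU_def)
next
  case (skip x s z q j i u q' s' p r d)
  show ?case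
    by (rule ImpE'[OF inst_ax[OF nd_ax(6), of x s z q j i u GEmp GEmp r p d q' s'] _ skip.IH]) (simp add: B6f_def UU_def)
qed

lemma completeTT: "Tsem i a u \<Longrightarrow> nd [axB] (TT (emb i) (emb a) (emb u))"
proof -
  assume "Tsem i a u"
  then have h: "nd [axB] (UU (emb GEmp) (emb GEmp) (emb (a \<cdot> GEmp)) (emb GOne) (emb i) (emb i) (emb u))"
    unfolding Tsem_def by (rule complete_U)
  show ?thesis
    by (rule ImpE'[OF inst_ax[OF nd_ax(2), of GEmp GEmp GEmp GEmp GEmp i u a GEmp GEmp GEmp GEmp GEmp GEmp] _ h])
       (simp add: B2f_def UU_def TT_def)
qed

theorem corollary4:
  fixes enc :: "form \<Rightarrow> gterm" and i :: gterm and F :: form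
  assumes "i \<in> Udec enc"
  shows "nd [axB] (TT (emb i) (emb (enc (PNeg F) \<cdot> GEmp)) (emb (GEmp \<cdot> GOne)))
           \<longleftrightarrow> tautology F"
proof
  assume "nd [axB] (TT (emb i) (emb (enc (PNeg F) \<cdot> GEmp)) (emb (GEmp \<cdot> GOne)))"
  then have T: "Tsem i (enc (PNeg F) \<cdot> GEmp) (GEmp \<cdot> GOne)" by (rule soundTT)
  show "tautology F"
  proof (rule ccontr)
    assume "\<not> tautology F"
    then have "satisfiable (PNeg F)" by (auto simp: tautology_def satisfiable_def)
    then have "halts_with i (enc (PNeg F) \<cdot> GEmp) (GEmp \<cdot> GZero)" using assms by (auto simp: Udec_def)
    then show False using T by (auto simp: halts_with_def)
  qed
next
  assume "tautology F"
  then have "\<not> satisfiable (PNeg F)" by (auto simp: tautology_def satisfiable_def)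
  then have "halts_with i (enc (PNeg F) \<cdot> GEmp) (GEmp \<cdot> GOne)" using assms by (auto simp: Udec_def)
  then have "Tsem i (enc (PNeg F) \<cdot> GEmp) (GEmp \<cdot> GOne)" by (auto simp: halts_with_def)
  then show "nd [axB] (TT (emb i) (emb (enc (PNeg F) \<cdot> GEmp)) (emb (GEmp \<cdot> GOne)))"
    by (rule completeTT)
qed

end
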